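(* Let $R = \{(x,y,z)\in\mathbb{R}^3 : x^2+y^2-z^2\le 1,\ y^2+z^2-x^2\le 1,\ z^2+x^2-y^2\le 1\}$ be the intersection of the three solid hyperboloids. Then the volume (Lebesgue measure) of $R$ equals $8\log 2 = \log 256$, where $\log$ denotes the natural logarithm. *)

theory Defs
  imports "HOL-Analysis.Analysis"
begin

definition hyperboloid_region :: "(real \<times> real \<times> real) set" where
  "hyperboloid_region = {(x, y, z). x^2 + y^2 - z^2 \<le> 1 \<and> y^2 + z^2 - x^2 \<le> 1 \<and> z^2 + x^2 - y^2 \<le> 1}"

end

theory Submission
  imports Defs "HOL-Real_Asymp.Real_Asymp"
begin

definition hz :: "real \<Rightarrow> real \<Rightarrow> real" where
  "hz x y = (if x^2 \<le> 1 \<and> y^2 \<le> 1 then 2 * (sqrt (1 - \<bar>x^2 - y^2\<bar>) - sqrt (max 0 (x^2 + y^2 - 1))) else 0)"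

definition Gf :: "real \<Rightarrow> real" where
  "Gf a = 2 * ((1 - a^2) * (ln (1 + a) - ln (1 - a)) + (1 + a^2) * (pi/2 - 2 * arctan a))"

definition G :: "real \<Rightarrow> real" where
  "G x = (if x^2 < 1 then Gf \<bar>x\<bar> else 0)"

lemma hz_nonneg: "0 \<le> hz x y"
proof -
  have "max 0 (x^2 + y^2 - 1) \<le> 1 - \<bar>x^2 - y^2\<bar>" if "x^2 \<le> 1" "y^2 \<le> 1"
    using that zero_le_power2[of x] zero_le_power2[of y] unfolding max_def by (smt (verit))
  then show ?thesis unfolding hz_def by (auto intro: real_sqrt_le_mono)
qed

lemma annulus_measure:
  fixes p q :: real assumes pq: "0 \<le> p" "p \<le> q"
  shows "emeasure lborel {z::real. p \<le> \<bar>z\<bar> \<and> \<bar>z\<bar> \<le> q} = ennreal (2 * (q - p))"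
proof (cases "p = 0")
  case True
  then have "{z::real. p \<le> \<bar>z\<bar> \<and> \<bar>z\<bar> \<le> q} = {-q..q}" by auto
  then show ?thesis using True pq by simp
next
  case False
  then have p: "0 < p" using pq by simp
  have eq: "{z::real. p \<le> \<bar>z\<bar> \<and> \<bar>z\<bar> \<le> q} = {-q..-p} \<union> {p..q}" using p by auto
  have "emeasure lborel ({-q..-p} \<union> {p..q}) = emeasure lborel {-q..-p} + emeasure lborel {p..q}"
    using p by (intro plus_emeasure[symmetric]) auto
  also have "\<dots> = ennreal (q - p) + ennreal (q - p)" using pq by simp
  also have "\<dots> = ennreal (2 * (q - p))" using pq by (simp add: ennreal_plus[symmetric] del: ennreal_plus)
  finally show ?thesis unfolding eq .
qed

lemma inner_measure:
  "emeasure lborel (Pair y -` (Pair x -` hyperboloid_region)) = ennreal (hz x y)"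
proof -
  define A where "A = x^2 + y^2 - 1"
  define B where "B = 1 - \<bar>x^2 - y^2\<bar>"
  have mem: "Pair y -` (Pair x -` hyperboloid_region) = {z. A \<le> z^2 \<and> z^2 \<le> B}"
    unfolding hyperboloid_region_def A_def B_def by (auto simp: abs_if)
  show ?thesis
  proof (cases "x^2 \<le> 1 \<and> y^2 \<le> 1")
    case False
    then have "B < A" unfolding A_def B_def by (auto simp: abs_if)
    then have e: "{z. A \<le> z^2 \<and> z^2 \<le> B} = {}" by auto
    have "hz x y = 0" unfolding hz_def by (rule if_not_P[OF False])
    then show ?thesis unfolding mem e by simp
  next
    case True
    have B0: "0 \<le> B" "max 0 A \<le> B" using True zero_le_power2[of x] zero_le_power2[of y]
      unfolding A_def B_def max_def by (smt (verit))+
    have set: "{z. A \<le> z^2 \<and> z^2 \<le> B} = {z. sqrt (max 0 A) \<le> \<bar>z\<bar> \<and> \<bar>z\<bar> \<le> sqrt B}"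
    proof -
      have "z^2 \<le> B \<longleftrightarrow> \<bar>z\<bar> \<le> sqrt B" for z
        by (metis real_sqrt_abs real_sqrt_le_iff)
      moreover have "A \<le> z^2 \<longleftrightarrow> sqrt (max 0 A) \<le> \<bar>z\<bar>" for z
      proof -
        have "A \<le> z^2 \<longleftrightarrow> max 0 A \<le> z^2"
        proof (cases "0 \<le> A")
          case True
          then show ?thesis by (simp add: max_def)
        next
          case False
          have "A \<le> z^2" using False zero_le_power2[of z] by linarith
          with False show ?thesis by (simp add: max_def)
        qed
        also have "\<dots> \<longleftrightarrow> sqrt (max 0 A) \<le> sqrt (z^2)" by (rule real_sqrt_le_iff[symmetric])
        finally show ?thesis by simp
      qed
      ultimately show ?thesis by auto
    qed
    have "emeasure lborel {z. sqrt (max 0 A) \<le> \<bar>z\<bar> \<and> \<bar>z\<bar> \<le> sqrt B} = ennreal (2 * (sqrt B - sqrt (max 0 A)))"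
      using B0 by (intro annulus_measure) auto
    then show ?thesis using True unfolding mem set by (simp add: hz_def A_def B_def)
  qed
qed

lemma sqrt_rule: "(g has_real_derivative D) (at x) \<Longrightarrow> 0 < g x \<Longrightarrow> ((\<lambda>x. sqrt (g x)) has_real_derivative inverse (sqrt (g x)) / 2 * D) (at x)"
  by (rule DERIV_chain2[OF DERIV_real_sqrt])
lemma ln_rule: "(g has_real_derivative D) (at x) \<Longrightarrow> 0 < g x \<Longrightarrow> ((\<lambda>x. ln (g x)) has_real_derivative inverse (g x) * D) (at x)"
  by (rule DERIV_chain2[OF DERIV_ln])
lemma arctan_rule: "(g has_real_derivative D) (at x) \<Longrightarrow> ((\<lambda>x. arctan (g x)) has_real_derivative inverse (1 + (g x)^2) * D) (at x)"
  by (rule DERIV_chain2[OF DERIV_arctan])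

lemma F3_deriv:
  fixes k y :: real assumes k: "0 < k" "k < y^2" "0 < y"
  shows "((\<lambda>y. (y * sqrt (y^2 - k) - k * ln (y + sqrt (y^2 - k))) / 2) has_real_derivative sqrt (y^2 - k)) (at y)"
proof -
  define s where "s = sqrt (y^2 - k)"
  have s2: "s^2 = y^2 - k" unfolding s_def using k by simp
  have sp: "s > 0" unfolding s_def using k by simp
  have ys: "y + s > 0" using sp k by simp
  have p1: "0 < y^2 - k" using k by simp
  have p2: "0 < y + sqrt (y^2 - k)" using ys unfolding s_def .
  have kk: "k = y^2 - s^2" using s2 by simp
  have dk: "((\<lambda>y. y^2 - k) has_real_derivative 2*y) (at y)"
    by (auto intro!: derivative_eq_intros)
  show ?thesis
    apply (rule DERIV_cong)
     apply (rule DERIV_cdivide, rule DERIV_diff, rule DERIV_mult, rule DERIV_ident, rule sqrt_rule[OF dk p1],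
       rule DERIV_cmult, rule ln_rule, rule DERIV_add, rule DERIV_ident, rule sqrt_rule[OF dk p1], rule p2)
    unfolding s_def[symmetric]
    using sp ys
    apply (simp add: divide_simps)
    apply (simp add: kk power2_eq_square algebra_simps)
    done
qed

lemma F2_deriv:
  fixes m y :: real assumes m: "y^2 < m"
  shows "((\<lambda>y. (y * sqrt (m - y^2) + m * arctan (y / sqrt (m - y^2))) / 2) has_real_derivative sqrt (m - y^2)) (at y)"
proof -
  define s where "s = sqrt (m - y^2)"
  have s2: "s^2 = m - y^2" unfolding s_def using m by simp
  have sp: "s > 0" unfolding s_def using m by simp
  have p1: "0 < m - y^2" using m by simp
  have p2: "sqrt (m - y^2) \<noteq> 0" using sp unfolding s_def by simp
  have mm: "m = s^2 + y^2" using s2 by simp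
  have dm: "((\<lambda>y. m - y^2) has_real_derivative - (2*y)) (at y)"
    by (auto intro!: derivative_eq_intros)
  show ?thesis
    apply (rule DERIV_cong)
     apply (rule DERIV_cdivide, rule DERIV_add, rule DERIV_mult, rule DERIV_ident, rule sqrt_rule[OF dm p1],
       rule DERIV_cmult, rule arctan_rule, rule DERIV_divide, rule DERIV_ident, rule sqrt_rule[OF dm p1], rule p2)
    unfolding s_def[symmetric]
    using sp
    apply (simp add: divide_simps)
    apply (simp add: mm power2_eq_square algebra_simps)
    done
qed
lemma F1_deriv:
  fixes k y :: real assumes k: "0 < k"
  shows "((\<lambda>y. (y * sqrt (k + y^2) + k * ln (y + sqrt (k + y^2))) / 2) has_real_derivative sqrt (k + y^2)) (at y)"
proof -
  define s where "s = sqrt (k + y^2)"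
  have s2: "s^2 = k + y^2" unfolding s_def using k by (simp add: add_pos_nonneg)
  have sp: "s > 0" unfolding s_def using k by (simp add: add_pos_nonneg)
  have ys: "y + s > 0"
  proof -
    have "sqrt (y^2) < s" unfolding s_def using k by (intro real_sqrt_less_mono) simp
    then have "\<bar>y\<bar> < s" by simp
    then show ?thesis by simp
  qed
  have p1: "0 < k + y^2" using k by (simp add: add_pos_nonneg)
  have p2: "0 < y + sqrt (k + y^2)" using ys unfolding s_def .
  have kk: "k = s^2 - y^2" using s2 by simp
  have dk: "((\<lambda>y. k + y^2) has_real_derivative 2*y) (at y)"
    by (auto intro!: derivative_eq_intros)
  show ?thesis
    apply (rule DERIV_cong)
     apply (rule DERIV_cdivide, rule DERIV_add, rule DERIV_mult, rule DERIV_ident, rule sqrt_rule[OF dk p1],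
       rule DERIV_cmult, rule ln_rule, rule DERIV_add, rule DERIV_ident, rule sqrt_rule[OF dk p1], rule p2)
    unfolding s_def[symmetric]
    using sp ys
    apply (simp add: divide_simps)
    apply (simp add: kk power2_eq_square algebra_simps)
    done
qed

lemma half_integral:
  assumes a: "0 < a" "a < 1"
  shows "(hz a has_integral Gf a / 2) {0..1}"
proof -
  define k where "k = 1 - a^2"
  define m where "m = 1 + a^2"
  define c where "c = sqrt k"
  have a2: "0 < a^2" "a^2 < 1" using a by (simp_all add: abs_square_less_1)
  have k: "0 < k" "k < 1" using a2 by (simp_all add: k_def)
  have c: "0 < c" "c < 1" "c^2 = k" using k by (simp_all add: c_def)
  have sq1: "sqrt (k + a^2) = 1" "sqrt (m - 1) = a" "sqrt (m - a^2) = 1" "sqrt (1 - k) = a" "sqrt (c^2 - k) = 0"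
    using a c by (simp_all add: k_def m_def)
  define F1 where "F1 = (\<lambda>y. (y * sqrt (k + y^2) + k * ln (y + sqrt (k + y^2))) / 2)"
  define F2 where "F2 = (\<lambda>y. (y * sqrt (m - y^2) + m * arctan (y / sqrt (m - y^2))) / 2)"
  define F3 where "F3 = (\<lambda>y. (y * sqrt (y^2 - k) - k * ln (y + sqrt (y^2 - k))) / 2)"
  have I1: "((\<lambda>y. sqrt (k + y^2)) has_integral F1 a - F1 0) {0..a}"
  proof (rule fundamental_theorem_of_calculus)
    fix y assume "y \<in> {0..a}"
    show "(F1 has_vector_derivative sqrt (k + y^2)) (at y within {0..a})"
      unfolding has_real_derivative_iff_has_vector_derivative[symmetric] F1_def
      by (rule has_field_derivative_at_within, rule F1_deriv, rule k)
  qed (use a in simp)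
  have I2: "((\<lambda>y. sqrt (m - y^2)) has_integral F2 1 - F2 a) {a..1}"
  proof (rule fundamental_theorem_of_calculus)
    fix y assume y: "y \<in> {a..1}"
    then have "y^2 \<le> 1" using a by (simp add: abs_square_le_1)
    then have ym: "y^2 < m" using a2(1) unfolding m_def by linarith
    show "(F2 has_vector_derivative sqrt (m - y^2)) (at y within {a..1})"
      unfolding has_real_derivative_iff_has_vector_derivative[symmetric] F2_def
      by (rule has_field_derivative_at_within, rule F2_deriv[OF ym])
  qed (use a in simp)
  have I3: "((\<lambda>y. sqrt (y^2 - k)) has_integral F3 1 - F3 c) {c..1}"
  proof (rule fundamental_theorem_of_calculus_interior)
    have c1: "continuous_on {c..1} (\<lambda>y. y + sqrt (y^2 - k))"
      by (intro continuous_on_add continuous_on_id continuous_on_real_sqrt continuous_on_diff continuous_on_power continuous_on_const)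
    have nz: "\<forall>y\<in>{c..1}. y + sqrt (y^2 - k) \<noteq> 0"
    proof
      fix y assume y: "y \<in> {c..1}"
      then have "c^2 \<le> y^2" using c by (intro power_mono) auto
      then have "0 \<le> sqrt (y^2 - k)" using c by simp
      moreover have "0 < y" using y c by simp
      ultimately show "y + sqrt (y^2 - k) \<noteq> 0" by linarith
    qed
    have c2: "continuous_on {c..1} (\<lambda>y. ln (y + sqrt (y^2 - k)))"
      by (rule continuous_on_ln[OF c1 nz])
    show "continuous_on {c..1} F3" unfolding F3_def
      by (intro continuous_on_divide continuous_on_diff continuous_on_mult continuous_on_id continuous_on_real_sqrt
          continuous_on_power continuous_on_const c2) auto
    fix y assume y: "y \<in> {c<..<1}"
    then have "c^2 < y^2" using c by (intro power_strict_mono) auto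
    then show "(F3 has_vector_derivative sqrt (y^2 - k)) (at y)"
      unfolding has_real_derivative_iff_has_vector_derivative[symmetric] F3_def
      using y c by (intro F3_deriv) auto
  qed (use c in simp)
  define f1 where "f1 = (\<lambda>y. sqrt (1 - \<bar>a^2 - y^2\<bar>))"
  define f2 where "f2 = (\<lambda>y. sqrt (max 0 (a^2 + y^2 - 1)))"
  have J1: "(f1 has_integral F1 a - F1 0) {0..a}"
  proof (rule has_integral_eq[OF _ I1])
    fix y assume y: "y \<in> {0..a}"
    then have "y^2 \<le> a^2" by (intro power_mono) auto
    then show "sqrt (k + y^2) = f1 y" by (simp add: f1_def k_def)
  qed
  have J2: "(f1 has_integral F2 1 - F2 a) {a..1}"
  proof (rule has_integral_eq[OF _ I2])
    fix y assume y: "y \<in> {a..1}"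
    then have "a^2 \<le> y^2" using a by (intro power_mono) auto
    then show "sqrt (m - y^2) = f1 y" by (simp add: f1_def m_def)
  qed
  have K1: "(f2 has_integral 0) {0..c}"
  proof (rule has_integral_eq[OF _ has_integral_0])
    fix y assume y: "y \<in> {0..c}"
    then have "y^2 \<le> c^2" by (intro power_mono) auto
    then show "0 = f2 y" using c by (simp add: f2_def k_def max_def)
  qed
  have K2: "(f2 has_integral F3 1 - F3 c) {c..1}"
  proof (rule has_integral_eq[OF _ I3])
    fix y assume y: "y \<in> {c..1}"
    then have "c^2 \<le> y^2" using c by (intro power_mono) auto
    then show "sqrt (y^2 - k) = f2 y" using c by (simp add: f2_def k_def max_def)
  qed
  have Jf: "(f1 has_integral (F1 a - F1 0) + (F2 1 - F2 a)) {0..1}"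
    by (rule has_integral_combine[OF _ _ J1 J2]) (use a in auto)
  have Kf: "(f2 has_integral 0 + (F3 1 - F3 c)) {0..1}"
    by (rule has_integral_combine[OF _ _ K1 K2]) (use c in auto)
  have H: "((\<lambda>y. 2 * (f1 y - f2 y)) has_integral 2 * (((F1 a - F1 0) + (F2 1 - F2 a)) - (0 + (F3 1 - F3 c)))) {0..1}"
    by (rule has_integral_mult_right, rule has_integral_diff[OF Jf Kf])
  have H': "(hz a has_integral 2 * (((F1 a - F1 0) + (F2 1 - F2 a)) - (0 + (F3 1 - F3 c)))) {0..1}"
  proof (rule has_integral_eq[OF _ H])
    fix y :: real assume y: "y \<in> {0..1}"
    then have "y^2 \<le> 1" by (simp add: abs_square_le_1)
    then show "2 * (f1 y - f2 y) = hz a y" using a2 by (simp add: hz_def f1_def f2_def)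
  qed
  have lc: "ln c = (ln (1 - a) + ln (1 + a)) / 2"
  proof -
    have "k = (1 - a) * (1 + a)" by (simp add: k_def algebra_simps power2_eq_square)
    then have "ln k = ln (1 - a) + ln (1 + a)" using a by (simp add: ln_mult)
    then show ?thesis unfolding c_def using k by (simp add: ln_sqrt)
  qed
  have at: "arctan (1 / a) = pi / 2 - arctan a" using arctan_inverse[of a] a by (simp add: inverse_eq_divide)
  have val: "2 * (((F1 a - F1 0) + (F2 1 - F2 a)) - (0 + (F3 1 - F3 c))) = Gf a / 2"
  proof -
    have v1: "F1 a = (a + k * ln (1 + a)) / 2" unfolding F1_def using sq1 by (simp add: add.commute)
    have v2: "F1 0 = k * ln c / 2" unfolding F1_def c_def by simp
    have v3: "F2 1 = (a + m * arctan (1 / a)) / 2" unfolding F2_def using sq1 by simp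
    have v4: "F2 a = (a + m * arctan a) / 2" unfolding F2_def using sq1 by simp
    have v5: "F3 1 = (a - k * ln (1 + a)) / 2" unfolding F3_def using sq1 by simp
    have v6: "F3 c = - (k * ln c) / 2" unfolding F3_def using sq1 c by simp
    show ?thesis unfolding v1 v2 v3 v4 v5 v6 lc at Gf_def k_def m_def
      by (simp add: field_simps)
  qed
  show ?thesis using H' unfolding val .
qed

lemma middle_integral:
  assumes "x \<noteq> -1" "x \<noteq> 0" "x \<noteq> 1"
  shows "(hz x has_integral G x) {-1..1}"
proof (cases "x^2 < 1")
  case True
  define a where "a = \<bar>x\<bar>"
  have a: "0 < a" "a < 1" using True assms by (auto simp: a_def abs_square_less_1)
  have hza: "hz x = hz a" unfolding a_def by (intro ext) (simp add: hz_def)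
  have Ga: "G x = Gf a" using True by (simp add: G_def a_def)
  have H: "(hz a has_integral Gf a / 2) {0..1}" by (rule half_integral[OF a])
  have "(\<lambda>y. hz a (-y)) = hz a" by (intro ext) (simp add: hz_def)
  then have "((\<lambda>y. hz a (-y)) has_integral Gf a / 2) {0..1}" using H by simp
  then have H2: "(hz a has_integral Gf a / 2) {-1..0}"
  proof -
    have "((\<lambda>y. hz a (-y)) has_integral Gf a / 2) {-0..-(-1)}" using \<open>((\<lambda>y. hz a (-y)) has_integral Gf a / 2) {0..1}\<close> by simp
    then show ?thesis by (rule has_integral_reflect_real[THEN iffD1])
  qed
  have "(hz a has_integral Gf a / 2 + Gf a / 2) {-1..1}"
    by (rule has_integral_combine[OF _ _ H2 H]) auto
  then show ?thesis unfolding hza Ga by simp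
next
  case False
  have "\<bar>x\<bar> \<noteq> 1" using assms by (simp add: abs_if)
  then have "x^2 \<noteq> 1" by (simp add: abs_square_eq_1)
  with False have nx: "\<not> x^2 \<le> 1" by linarith
  have "hz x = (\<lambda>y. 0)" using nx by (intro ext) (simp add: hz_def)
  moreover have "G x = 0" using False by (simp add: G_def)
  ultimately show ?thesis by simp
qed

definition Phi :: "real \<Rightarrow> real" where
  "Phi a = 2 * ((a - a^3/3 - 2/3) * (ln (1 + a) - ln (1 - a)) + 4/3 * ln (1 + a)
     + (a + a^3/3) * (pi/2 - 2 * arctan a) + 2/3 * ln (1 + a^2))"
lemma Phi_deriv:
  assumes "0 < a" "a < 1"
  shows "(Phi has_real_derivative Gf a) (at a)"
proof -
  have sq: "0 \<le> a * a" "0 \<le> a^2" by simp_all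
  have p: "0 < 1 + a" "0 < 1 - a" "0 < 1 + a^2" using assms sq by linarith+
  have d0: "((\<lambda>a. ln (1 + a)) has_real_derivative 1/(1+a)) (at a)"
    using p by (auto intro!: derivative_eq_intros)
  have d1: "((\<lambda>a. ln (1 - a)) has_real_derivative -1/(1-a)) (at a)"
    using p by (auto intro!: derivative_eq_intros)
  have d3: "((\<lambda>a. pi/2 - 2 * arctan a) has_real_derivative -2/(1+a^2)) (at a)"
    using p by (auto intro!: derivative_eq_intros simp: field_simps)
  have d4: "((\<lambda>a. ln (1 + a^2)) has_real_derivative 2*a/(1+a^2)) (at a)"
    using p by (auto intro!: derivative_eq_intros simp: field_simps power2_eq_square)
  have dq: "((\<lambda>a. a - a^3/3 - 2/3) has_real_derivative 1 - a^2) (at a)"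
    by (auto intro!: derivative_eq_intros simp: power2_eq_square)
  have dp: "((\<lambda>a. a + a^3/3) has_real_derivative 1 + a^2) (at a)"
    by (auto intro!: derivative_eq_intros simp: power2_eq_square)
  have "(Phi has_real_derivative
     2 * (((1 - a^2) * (ln (1 + a) - ln (1 - a)) + (1/(1+a) - -1/(1-a)) * (a - a^3/3 - 2/3)) + 4/3 * (1/(1+a))
     + ((1 + a^2) * (pi/2 - 2 * arctan a) + (-2/(1+a^2)) * (a + a^3/3)) + 2/3 * (2*a/(1+a^2)))) (at a)"
    unfolding Phi_def
    by (intro DERIV_cmult DERIV_add DERIV_mult DERIV_diff d0 d1 d3 d4 dq dp)
  moreover have "2 * (((1 - a^2) * (ln (1 + a) - ln (1 - a)) + (1/(1+a) - -1/(1-a)) * (a - a^3/3 - 2/3)) + 4/3 * (1/(1+a))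
     + ((1 + a^2) * (pi/2 - 2 * arctan a) + (-2/(1+a^2)) * (a + a^3/3)) + 2/3 * (2*a/(1+a^2))) = Gf a"
  proof -
    have nz: "1 - a \<noteq> 0" "1 + a \<noteq> 0" "1 + a^2 \<noteq> 0" using p by auto
    have e0: "a - a^3/3 - 2/3 = - ((1-a) * (1-a) * (a+2)) / 3"
      by (simp add: algebra_simps power2_eq_square power3_eq_cube)
    have e1: "1/(1+a) - -1/(1-a) = 2 / ((1+a) * (1-a))"
      using nz by (simp add: divide_simps)
    have e2: "2 / ((1+a) * (1-a)) * (- ((1-a) * (1-a) * (a+2)) / 3) = 2 * (a - 1) * (a + 2) / (3 * (1 + a))"
      using nz by (simp add: divide_simps) algebra
    have e3: "2 * (a - 1) * (a + 2) / (3 * (1 + a)) + 4/3 * (1/(1+a)) = 2/3 * a"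
      using nz by (simp add: divide_simps) algebra
    have h1: "(1/(1+a) - -1/(1-a)) * (a - a^3/3 - 2/3) + 4/3 * (1/(1+a)) = 2/3 * a"
      unfolding e0 e1 e2 e3 ..
    have h2: "(-2/(1+a^2)) * (a + a^3/3) + 2/3 * (2*a/(1+a^2)) = - 2/3 * a"
      using nz by (simp add: divide_simps) algebra
    have gen: "2 * (A + C + D + (B + E) + F) = 2 * (A + B)"
      if "C + D = 2/3*a" "E + F = -2/3*a" for A B C D E F :: real
      using that by (simp add: algebra_simps)
    show ?thesis unfolding Gf_def by (rule gen[OF h1 h2])
  qed
  ultimately show ?thesis by simp
qed

lemma Phi_cont: "continuous_on {0..1} Phi"
proof -
  have lim: "((\<lambda>a. (a - a^3/3 - 2/3) * ln (1 - a)) \<longlongrightarrow> 0) (at_left (1::real))"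
    by real_asymp
  have T: "continuous_on {0..1} (\<lambda>a::real. (a - a^3/3 - 2/3) * ln (1 - a))"
    unfolding continuous_on_eq_continuous_within
  proof
    fix a :: real assume a: "a \<in> {0..1}"
    show "continuous (at a within {0..1}) (\<lambda>a::real. (a - a^3/3 - 2/3) * ln (1 - a))"
    proof (cases "a = 1")
      case True
      have "at a within {0..1} = at_left (1::real)"
        using True by (simp add: at_within_Icc_at_left)
      then show ?thesis using lim True by (simp add: continuous_within)
    next
      case False
      with a have a1: "0 < 1 - a" by auto
      have dq: "((\<lambda>a. a - a^3/3 - 2/3) has_real_derivative 1 - a^2) (at a)"
        by (auto intro!: derivative_eq_intros simp: power2_eq_square)
      have d1: "((\<lambda>a. 1 - a) has_real_derivative - 1) (at a)"
        by (auto intro!: derivative_eq_intros)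
      have "((\<lambda>a. (a - a^3/3 - 2/3) * ln (1 - a)) has_real_derivative
          (1 - a^2) * ln (1 - a) + (inverse (1 - a) * (- 1)) * (a - a^3/3 - 2/3)) (at a)"
        by (rule DERIV_mult[OF dq ln_rule[OF d1 a1]])
      then have "isCont (\<lambda>a. (a - a^3/3 - 2/3) * ln (1 - a)) a" by (rule DERIV_isCont)
      then show ?thesis by (rule continuous_at_imp_continuous_at_within)
    qed
  qed
  have cl1: "continuous_on {0..1::real} (\<lambda>a. ln (1 + a))"
    by (rule continuous_on_ln) (auto intro: continuous_on_add continuous_on_const continuous_on_id)
  have cl2: "continuous_on {0..1::real} (\<lambda>a. ln (1 + a^2))"
  proof (rule continuous_on_ln)
    show "continuous_on {0..1::real} (\<lambda>a. 1 + a^2)"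
      by (intro continuous_on_add continuous_on_const continuous_on_power continuous_on_id)
    show "\<forall>x\<in>{0..1::real}. 1 + x^2 \<noteq> 0"
    proof
      fix x :: real
      have "0 \<le> x^2" by simp
      then show "1 + x^2 \<noteq> 0" by linarith
    qed
  qed
  have eq: "Phi = (\<lambda>a. 2 * ((a - a^3/3 - 2/3) * ln (1 + a) - (a - a^3/3 - 2/3) * ln (1 - a) + 4/3 * ln (1 + a)
     + (a + a^3/3) * (pi/2 - 2 * arctan a) + 2/3 * ln (1 + a^2)))"
    unfolding Phi_def by (intro ext) (simp add: right_diff_distrib)
  show ?thesis unfolding eq
    by (intro continuous_on_mult continuous_on_add continuous_on_diff continuous_on_const continuous_on_id
        continuous_on_power continuous_on_divide continuous_on_arctan T cl1 cl2) auto
qed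

lemma G_half: "(G has_integral (4 * ln 2)) {0..1}"
proof -
  have "(G has_integral (Phi 1 - Phi 0)) {0..1}"
  proof (rule fundamental_theorem_of_calculus_interior)
    show "continuous_on {0..1} Phi" by (rule Phi_cont)
    fix x :: real assume x: "x \<in> {0<..<1}"
    then have "x^2 < 1" by (simp add: abs_square_less_1)
    then have "G x = Gf x" using x by (simp add: G_def)
    then show "(Phi has_vector_derivative G x) (at x)"
      using Phi_deriv[of x] x by (simp add: has_real_derivative_iff_has_vector_derivative)
  qed simp
  moreover have "Phi 1 - Phi 0 = 4 * ln 2"
    by (simp add: Phi_def)
  ultimately show ?thesis by simp
qed

lemma outer_integral: "(G has_integral (8 * ln 2)) {-1..1}"
proof -
  have "((\<lambda>x. G (-x)) has_integral (4 * ln 2)) {0..1}"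
  proof -
    have "(\<lambda>x. G (-x)) = G" by (auto simp: G_def fun_eq_iff)
    then show ?thesis using G_half by simp
  qed
  then have H1: "(G has_integral (4 * ln 2)) {-1..0}"
  proof -
    have "((\<lambda>y. G (-y)) has_integral 4 * ln 2) {-0..-(-1)}" using \<open>((\<lambda>y. G (-y)) has_integral 4 * ln 2) {0..1}\<close> by simp
    then show ?thesis by (rule has_integral_reflect_real[THEN iffD1])
  qed
  have "(G has_integral (4 * ln 2 + 4 * ln 2)) {-1..1}"
    by (rule has_integral_combine[OF _ _ H1 G_half]) auto
  then show ?thesis by simp
qed

lemma G_nonneg: "0 \<le> G x"
proof -
  have "0 \<le> Gf a" if "0 \<le> a" "a < 1" for a :: real
  proof -
    have "ln (1 - a) \<le> ln (1 + a)" using that by simp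
    moreover have "1 - a^2 \<ge> 0" using that by (simp add: abs_square_le_1)
    moreover have "arctan a \<le> pi/4" using that arctan_less_iff[of a 1] by (simp add: arctan_one)
    ultimately show ?thesis unfolding Gf_def
      by (intro mult_nonneg_nonneg add_nonneg_nonneg) (auto simp: add_pos_nonneg)
  qed
  then show ?thesis unfolding G_def by (auto simp: abs_square_less_1)
qed

lemma region_closed: "closed hyperboloid_region"
proof -
  have "hyperboloid_region = {p. (fst p)^2 + (fst (snd p))^2 - (snd (snd p))^2 \<le> 1} \<inter> {p. (fst (snd p))^2 + (snd (snd p))^2 - (fst p)^2 \<le> 1} \<inter> {p. (snd (snd p))^2 + (fst p)^2 - (fst (snd p))^2 \<le> 1}"
    unfolding hyperboloid_region_def by auto
  also have "closed \<dots>"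
    by (intro closed_Int closed_Collect_le continuous_intros)
  finally show ?thesis .
qed
lemma region_borel: "hyperboloid_region \<in> sets (borel :: (real \<times> real \<times> real) measure)"
  using region_closed by (rule borel_closed)
lemma R: "hyperboloid_region \<in> sets (lborel \<Otimes>\<^sub>M (lborel \<Otimes>\<^sub>M lborel) :: (real \<times> real \<times> real) measure)"
proof -
  have eq: "(lborel \<Otimes>\<^sub>M (lborel \<Otimes>\<^sub>M lborel) :: (real \<times> real \<times> real) measure) = lborel"
    by (simp only: lborel_prod)
  show ?thesis using region_borel by (subst eq) simp
qed

theorem mainTheorem1:
  shows "emeasure lebesgue hyperboloid_region = ennreal (8 * ln 2)"
proof -
  have "emeasure lebesgue hyperboloid_region = emeasure lborel hyperboloid_region"
    using region_borel by simp
  also have "\<dots> = emeasure (lborel \<Otimes>\<^sub>M (lborel \<Otimes>\<^sub>M lborel)) hyperboloid_region"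
    by (simp only: lborel_prod)
  also have "\<dots> = (\<integral>\<^sup>+x. emeasure (lborel \<Otimes>\<^sub>M lborel) (Pair x -` hyperboloid_region) \<partial>lborel)"
    by (rule sigma_finite_measure.emeasure_pair_measure_alt[OF _ R]) 
       (simp add: lborel_prod lborel.sigma_finite_measure_axioms)
  also have "\<dots> = (\<integral>\<^sup>+x. (\<integral>\<^sup>+y. emeasure lborel (Pair y -` (Pair x -` hyperboloid_region)) \<partial>lborel) \<partial>lborel)"
  proof (rule nn_integral_cong)
    fix x :: real
    have Rx: "Pair x -` hyperboloid_region \<in> sets (lborel \<Otimes>\<^sub>M lborel :: (real \<times> real) measure)"
      using R by (rule sets_Pair1)
    show "emeasure (lborel \<Otimes>\<^sub>M lborel) (Pair x -` hyperboloid_region) = (\<integral>\<^sup>+y. emeasure lborel (Pair y -` (Pair x -` hyperboloid_region)) \<partial>lborel)"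
      by (rule sigma_finite_measure.emeasure_pair_measure_alt[OF _ Rx]) 
         (simp add: lborel.sigma_finite_measure_axioms)
  qed
  also have "\<dots> = (\<integral>\<^sup>+x. ennreal (G x) \<partial>lborel)"
  proof (rule nn_integral_cong_AE)
    have "AE x in lborel. x \<notin> {-1, 0, 1::real}"
      by (intro AE_not_in countable_imp_null_set_lborel) auto
    then show "AE x in lborel. (\<integral>\<^sup>+y. emeasure lborel (Pair y -` (Pair x -` hyperboloid_region)) \<partial>lborel) = ennreal (G x)"
    proof eventually_elim
      case (elim x)
      have "(\<integral>\<^sup>+y. emeasure lborel (Pair y -` (Pair x -` hyperboloid_region)) \<partial>lborel)
          = (\<integral>\<^sup>+y. ennreal (hz x y) * indicator {-1..1} y \<partial>lborel)"
        by (rule nn_integral_cong) (auto simp: inner_measure hz_def indicator_def abs_square_le_1)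
      also have "\<dots> = ennreal (G x)"
        by (rule nn_integral_has_integral_lebesgue'[OF _ middle_integral]) (use elim hz_nonneg in auto)
      finally show ?case .
    qed
  qed
  also have "\<dots> = (\<integral>\<^sup>+x. ennreal (G x) * indicator {-1..1} x \<partial>lborel)"
    by (rule nn_integral_cong) (auto simp: G_def indicator_def abs_square_less_1)
  also have "\<dots> = ennreal (8 * ln 2)"
    by (rule nn_integral_has_integral_lebesgue'[OF G_nonneg outer_integral])
  finally show ?thesis .
qed

end
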